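(* Let $(\bm \Pi, S)$ be a price system with $S\in\mathbb{R}_+^{(N+1)\times K}$. If the market model is complete, then it is a least-squares market, i.e. $S^+\bm\Pi\in\mathcal{Q}$, where $S^+$ is the Moore–Penrose pseudoinverse of $S$.
   Context: Single-period market with finite sample space $\Omega$, $K=|\Omega|$. A price system $(\bm\Pi,S)$: $\bm\Pi=(1,\Pi_2,\dots,\Pi_{N+1})^T\in\mathbb{R}_+^{N+1}$ are current prices and $S\in\mathbb{R}_+^{(N+1)\times K}$, with $S_{i\omega}$ the payoff of asset $i$ in outcome $\omega$; the first row of $S$ is all ones (safe asset), and the assets are non-redundant (no row of $S$ is a linear combination of the others). The market is arbitrage-free if there is no $\bm v\in\mathbb{R}^{N+1}$ with $\bm v^T\bm\Pi\le 0$, $S^T\bm v\ge 0$ and $(S^T\bm v)_j>0$ for some $j$. An arbitrage-free market model is complete if for every $\bm D\in\mathbb{R}_+^K$ there exists $\bm\xi\in\mathbb{R}^{N+1}$ with $\bm D=S^T\bm\xi$. $\mathcal{Q}:=\{\bm q\in\mathbb{R}^K: q_k>0\ \forall k,\ \sum_k q_k=1,\ S\bm q=\bm\Pi\}$ is the set of equivalent martingale measures. An arbitrage-free market model is a least-squares market if $S^+\bm\Pi\in\mathcal{Q}$. *)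

theory Defs
  imports "HOL-Analysis.Analysis"
begin

text \<open>Assets are indexed by a finite type 'n (with N+1 = CARD('n) elements), outcomes by a
finite type 'k (K = CARD('k)). The safe asset is the distinguished index i0.\<close>

definition price_system :: "'n::finite \<Rightarrow> real^'n \<Rightarrow> real^'k::finite^'n \<Rightarrow> bool" where
  "price_system i0 Pr S \<longleftrightarrow>
     Pr $ i0 = 1 \<and> (\<forall>i. 0 \<le> Pr $ i) \<and>
     (\<forall>i k. 0 \<le> S $ i $ k) \<and> (\<forall>k. S $ i0 $ k = 1) \<and>
     (\<forall>i. S $ i \<notin> span ((\<lambda>j. S $ j) ` (UNIV - {i})))"

definition arbitrage_free :: "real^'n::finite \<Rightarrow> real^'k::finite^'n \<Rightarrow> bool" where
  "arbitrage_free Pr S \<longleftrightarrow>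
     \<not> (\<exists>v :: real^'n. v \<bullet> Pr \<le> 0 \<and> (\<forall>j. 0 \<le> (transpose S *v v) $ j)
                        \<and> (\<exists>j. 0 < (transpose S *v v) $ j))"

definition complete_market :: "real^'n::finite \<Rightarrow> real^'k::finite^'n \<Rightarrow> bool" where
  "complete_market Pr S \<longleftrightarrow>
     arbitrage_free Pr S \<and>
     (\<forall>D :: real^'k. (\<forall>k. 0 \<le> D $ k) \<longrightarrow> (\<exists>\<xi> :: real^'n. D = transpose S *v \<xi>))"

definition EMM :: "real^'n::finite \<Rightarrow> real^'k::finite^'n \<Rightarrow> (real^'k) set" where
  "EMM Pr S = {q. (\<forall>k. 0 < q $ k) \<and> (\<Sum>k\<in>UNIV. q $ k) = 1 \<and> S *v q = Pr}"

definition pseudoinverse :: "real^'k::finite^'n::finite \<Rightarrow> real^'n^'k" where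
  "pseudoinverse A = (THE X. A ** X ** A = A \<and> X ** A ** X = X \<and>
                             transpose (A ** X) = A ** X \<and> transpose (X ** A) = X ** A)"

definition least_squares_market :: "real^'n::finite \<Rightarrow> real^'k::finite^'n \<Rightarrow> bool" where
  "least_squares_market Pr S \<longleftrightarrow> arbitrage_free Pr S \<and> pseudoinverse S *v Pr \<in> EMM Pr S"

end

theory Submission
  imports Defs
begin

lemma row_eq: "row i A = A $ i"
  by (simp add: row_def vec_eq_iff)

theorem mainTheorem4:
  fixes i0 :: "'n::finite" and Pr :: "real^'n" and S :: "real^'k::finite^'n"
  assumes "price_system i0 Pr S"
    and "complete_market Pr S"
  shows "least_squares_market Pr S"
proof -
  define T where "T = transpose S"
  have ps: "Pr $ i0 = 1" "\<And>k. S $ i0 $ k = 1"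
     "\<And>i. S $ i \<notin> span ((\<lambda>j. S $ j) ` (UNIV - {i}))"
    using assms(1) unfolding price_system_def by auto
  have af: "arbitrage_free Pr S" and cm: "\<And>D :: real^'k. (\<forall>k. 0 \<le> D $ k) \<Longrightarrow> (\<exists>\<xi> :: real^'n. D = T *v \<xi>)"
    using assms(2) unfolding complete_market_def T_def by auto
  have "surj (\<lambda>x. T *v x)"
  proof -
    have "\<exists>x. y = T *v x" for y :: "real^'k"
    proof -
      obtain a where a: "(\<chi> k. max (y$k) 0) = T *v a" using cm[of "\<chi> k. max (y$k) 0"] by auto
      obtain b where b: "(\<chi> k. max (- y$k) 0) = T *v b" using cm[of "\<chi> k. max (- y$k) 0"] by auto
      have "y = (\<chi> k. max (y$k) 0) - (\<chi> k. max (- y$k) 0)" by (simp add: vec_eq_iff max_def)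
      also have "\<dots> = T *v (a - b)" using a b by (simp add: matrix_vector_mult_diff_distrib)
      finally show ?thesis by blast
    qed
    then show ?thesis unfolding surj_def by blast
  qed
  then obtain C where C: "T ** C = mat 1" using matrix_right_invertible_surjective by blast
  have "\<forall>c. sum (\<lambda>i. c i *s column i T) UNIV = 0 \<longrightarrow> (\<forall>i. c i = 0)"
  proof (intro allI impI)
    fix c i assume h: "sum (\<lambda>i. c i *s column i T) UNIV = 0"
    show "c i = 0"
    proof (rule ccontr)
      assume ci: "c i \<noteq> 0"
      have h2: "sum (\<lambda>j. c j *s S $ j) UNIV = 0" using h by (simp add: T_def row_eq)
      have "sum (\<lambda>j. c j *s S $ j) UNIV = c i *s S $ i + sum (\<lambda>j. c j *s S $ j) (UNIV - {i})"
        by (simp add: sum.remove)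
      hence e1: "c i *s S $ i = - sum (\<lambda>j. c j *s S $ j) (UNIV - {i})"
        using h2 by (simp add: eq_neg_iff_add_eq_0)
      have "S $ i = (1 / c i) *s (c i *s S $ i)" using ci by (simp add: vector_smult_assoc)
      hence "S $ i = - (1 / c i) *s sum (\<lambda>j. c j *s S $ j) (UNIV - {i})"
        using e1 by (simp add: vec_eq_iff)
      moreover have "sum (\<lambda>j. c j *s S $ j) (UNIV - {i}) \<in> span ((\<lambda>j. S $ j) ` (UNIV - {i}))"
        unfolding scalar_mult_eq_scaleR by (intro span_sum span_mul span_base) auto
      ultimately have "S $ i \<in> span ((\<lambda>j. S $ j) ` (UNIV - {i}))"
        unfolding scalar_mult_eq_scaleR by (simp only: span_neg span_mul)
      with ps(3) show False by blast
    qed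
  qed
  then obtain B where B: "B ** T = mat 1" using matrix_left_invertible_independent_columns by blast
  have BC: "B = C"
  proof -
    have "B = B ** (T ** C)" using C by simp
    also have "\<dots> = (B ** T) ** C" by (simp add: matrix_mul_assoc)
    also have "\<dots> = C" using B by simp
    finally show ?thesis .
  qed
  define X where "X = transpose B"
  have SX: "S ** X = mat 1"
  proof -
    have "S ** transpose B = transpose (B ** T)" by (simp add: matrix_transpose_mul T_def)
    thus ?thesis using B by (simp add: transpose_mat X_def)
  qed
  have XS: "X ** S = mat 1"
  proof -
    have "transpose B ** S = transpose (T ** B)" by (simp add: matrix_transpose_mul T_def)
    thus ?thesis using C BC by (simp add: transpose_mat X_def)
  qed
  have pinv: "pseudoinverse S = X"
    unfolding pseudoinverse_def
  proof (rule the_equality)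
    show "S ** X ** S = S \<and> X ** S ** X = X \<and> transpose (S ** X) = S ** X \<and> transpose (X ** S) = X ** S"
      using SX XS by (simp add: transpose_mat)
  next
    fix Y assume "S ** Y ** S = S \<and> Y ** S ** Y = Y \<and> transpose (S ** Y) = S ** Y \<and> transpose (Y ** S) = Y ** S"
    hence y: "S ** Y ** S = S" by blast
    have "X = X ** S ** X" using XS by simp
    also have "\<dots> = X ** (S ** Y ** S) ** X" using y by simp
    also have "\<dots> = (X ** S) ** Y ** (S ** X)" by (simp add: matrix_mul_assoc)
    also have "\<dots> = Y" using XS SX by simp
    finally show "Y = X" by simp
  qed
  define q where "q = X *v Pr"
  have Sq: "S *v q = Pr" unfolding q_def using SX by (simp add: matrix_vector_mul_assoc)
  have sum1: "(\<Sum>k\<in>UNIV. q $ k) = 1"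
  proof -
    have "(S *v q) $ i0 = (\<Sum>k\<in>UNIV. q $ k)" using ps(2) by (simp add: matrix_vector_mult_def)
    thus ?thesis using Sq ps(1) by simp
  qed
  have pos: "0 < q $ k" for k
  proof -
    define v where "v = C *v axis k (1::real)"
    have Tv: "T *v v = axis k 1" unfolding v_def using C by (simp add: matrix_vector_mul_assoc)
    have "v \<bullet> Pr = (v v* S) \<bullet> q" using Sq by (simp add: dot_lmul_matrix)
    also have "v v* S = axis k 1" using Tv by (simp add: T_def)
    also have "axis k 1 \<bullet> q = q $ k" by (simp add: inner_axis')
    finally have e: "v \<bullet> Pr = q $ k" .
    have "(\<forall>j. 0 \<le> (transpose S *v v) $ j) \<and> (\<exists>j. 0 < (transpose S *v v) $ j)"
      using Tv unfolding T_def by (auto simp: axis_def intro!: exI[of _ k])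
    with af have "\<not> v \<bullet> Pr \<le> 0" unfolding arbitrage_free_def by blast
    with e show ?thesis by simp
  qed
  show ?thesis unfolding least_squares_market_def EMM_def
    using af pinv Sq sum1 pos q_def by auto
qed

end
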